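(* Let $\pi$ be a model with data space $Y$ and parameter space $\Theta$, $f$ a test quantity and $\phi$ a posterior family such that neither $\pi$ nor $\phi$ has ties with respect to $f$. Then $\phi$ passes continuous SBC with respect to $f$ if and only if for all $x\in[0,1]$ $$\int_Y\int_\Theta \mathbb{I}\Big[\int_\Theta \mathbb{I}[f(\theta,y)<f(\tilde\theta,y)]\,\phi(\theta\mid y)\,\mathrm{d}\theta\le x\Big]\,\pi_{\text{obs}}(y\mid\tilde\theta)\pi_{\text{prior}}(\tilde\theta)\,\mathrm{d}\tilde\theta\,\mathrm{d}y=x.$$
   Context: Model $\pi$: prior density $\pi_{\text{prior}}(\theta)$ on $\Theta$, observation density $\pi_{\text{obs}}(y\mid\theta)$ on $Y$, $\pi_{\text{marg}}(y)=\int_\Theta\pi_{\text{obs}}(y\mid\theta)\pi_{\text{prior}}(\theta)\,\mathrm{d}\theta$, $\pi_{\text{post}}(\theta\mid y)=\pi_{\text{obs}}(y\mid\theta)\pi_{\text{prior}}(\theta)/\pi_{\text{marg}}(y)$. A posterior family is $\phi:\Theta\times Y\to\mathbb{R}^+$ with $\int_\Theta\phi(\theta\mid y)\,\mathrm{d}\theta=1$ for all $y$; a test quantity is a measurable $f:\Theta\times Y\to\mathbb{R}$. $C_{\phi,f}(s\mid y)=\int_\Theta\mathbb{I}[f(\theta,y)\le s]\phi(\theta\mid y)\,\mathrm{d}\theta$, $D_{\phi,f}(s\mid y)=\int_\Theta\mathbb{I}[f(\theta,y)=s]\phi(\theta\mid y)\,\mathrm{d}\theta$, $D_f(s\mid y)=\int_\Theta\mathbb{I}[f(\theta,y)=s]\pi_{\text{post}}(\theta\mid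 y)\,\mathrm{d}\theta$. $\pi$ has ties w.r.t. $f$ if $D_f(f(\tilde\theta,y)\mid y)>0$ for some $y,\tilde\theta$; $\phi$ has ties w.r.t. $f$ if $D_{\phi,f}(f(\tilde\theta,y)\mid y)>0$ for some $y,\tilde\theta$. With $U\sim\mathrm{uniform}[0,1]$, $r_{\phi,f}(x\mid\tilde\theta,y)=\Pr\big(C_{\phi,f}(f(\tilde\theta,y)\mid y)-U\,D_{\phi,f}(f(\tilde\theta,y)\mid y)\le x\big)$, $q_{\phi,f}(x\mid y)=\int_\Theta\pi_{\text{post}}(\tilde\theta\mid y)r_{\phi,f}(x\mid\tilde\theta,y)\,\mathrm{d}\tilde\theta$. $\phi$ passes continuous SBC w.r.t. $f$ if $\int_Yq_{\phi,f}(x\mid y)\pi_{\text{marg}}(y)\,\mathrm{d}y=x$ for all $x\in[0,1]$. *)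

theory Defs
  imports "HOL-Probability.Probability"
begin

text \<open>Reference measures: MT on the parameter space Theta, MY on the data space Y.
  Densities are written as functions: prior th = pi_prior(th), obs y th = pi_obs(y | th),
  phi th y = phi(th | y), f th y = f(th, y).\<close>

definition is_model :: "'t measure \<Rightarrow> 'y measure \<Rightarrow> ('t \<Rightarrow> real) \<Rightarrow> ('y \<Rightarrow> 't \<Rightarrow> real) \<Rightarrow> bool" where
  "is_model MT MY prior obs \<longleftrightarrow>
     sigma_finite_measure MT \<and> sigma_finite_measure MY \<and>
     prior \<in> borel_measurable MT \<and> (\<forall>th\<in>space MT. prior th \<ge> 0) \<and>
     (\<integral>\<^sup>+ th. ennreal (prior th) \<partial>MT) = 1 \<and>
     (\<lambda>(y, th). obs y th) \<in> borel_measurable (MY \<Otimes>\<^sub>M MT) \<and>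
     (\<forall>y\<in>space MY. \<forall>th\<in>space MT. obs y th \<ge> 0) \<and>
     (\<forall>th\<in>space MT. (\<integral>\<^sup>+ y. ennreal (obs y th) \<partial>MY) = 1)"

definition is_posterior_family :: "'t measure \<Rightarrow> 'y measure \<Rightarrow> ('t \<Rightarrow> 'y \<Rightarrow> real) \<Rightarrow> bool" where
  "is_posterior_family MT MY phi \<longleftrightarrow>
     (\<lambda>(th, y). phi th y) \<in> borel_measurable (MT \<Otimes>\<^sub>M MY) \<and>
     (\<forall>th\<in>space MT. \<forall>y\<in>space MY. phi th y \<ge> 0) \<and>
     (\<forall>y\<in>space MY. (\<integral>\<^sup>+ th. ennreal (phi th y) \<partial>MT) = 1)"

definition is_test_quantity :: "'t measure \<Rightarrow> 'y measure \<Rightarrow> ('t \<Rightarrow> 'y \<Rightarrow> real) \<Rightarrow> bool" where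
  "is_test_quantity MT MY f \<longleftrightarrow> (\<lambda>(th, y). f th y) \<in> borel_measurable (MT \<Otimes>\<^sub>M MY)"

definition marg :: "'t measure \<Rightarrow> ('t \<Rightarrow> real) \<Rightarrow> ('y \<Rightarrow> 't \<Rightarrow> real) \<Rightarrow> 'y \<Rightarrow> real" where
  "marg MT prior obs y = (\<integral> th. obs y th * prior th \<partial>MT)"

definition post :: "'t measure \<Rightarrow> ('t \<Rightarrow> real) \<Rightarrow> ('y \<Rightarrow> 't \<Rightarrow> real) \<Rightarrow> 't \<Rightarrow> 'y \<Rightarrow> real" where
  "post MT prior obs th y = obs y th * prior th / marg MT prior obs y"

definition Ccdf :: "'t measure \<Rightarrow> ('t \<Rightarrow> 'y \<Rightarrow> real) \<Rightarrow> ('t \<Rightarrow> 'y \<Rightarrow> real) \<Rightarrow> real \<Rightarrow> 'y \<Rightarrow> real" where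
  "Ccdf MT phi f s y = (\<integral> th. indicator {th. f th y \<le> s} th * phi th y \<partial>MT)"

definition Dmass :: "'t measure \<Rightarrow> ('t \<Rightarrow> 'y \<Rightarrow> real) \<Rightarrow> ('t \<Rightarrow> 'y \<Rightarrow> real) \<Rightarrow> real \<Rightarrow> 'y \<Rightarrow> real" where
  "Dmass MT phi f s y = (\<integral> th. indicator {th. f th y = s} th * phi th y \<partial>MT)"

definition model_has_ties :: "'t measure \<Rightarrow> 'y measure \<Rightarrow> ('t \<Rightarrow> real) \<Rightarrow> ('y \<Rightarrow> 't \<Rightarrow> real) \<Rightarrow> ('t \<Rightarrow> 'y \<Rightarrow> real) \<Rightarrow> bool" where
  "model_has_ties MT MY prior obs f \<longleftrightarrow>
     (\<exists>y\<in>space MY. \<exists>th'\<in>space MT. Dmass MT (post MT prior obs) f (f th' y) y > 0)"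

definition family_has_ties :: "'t measure \<Rightarrow> 'y measure \<Rightarrow> ('t \<Rightarrow> 'y \<Rightarrow> real) \<Rightarrow> ('t \<Rightarrow> 'y \<Rightarrow> real) \<Rightarrow> bool" where
  "family_has_ties MT MY phi f \<longleftrightarrow>
     (\<exists>y\<in>space MY. \<exists>th'\<in>space MT. Dmass MT phi f (f th' y) y > 0)"

text \<open>r_{phi,f}(x | th', y) = Pr(C - U D <= x), U ~ uniform[0,1] (Lebesgue measure on [0,1]).\<close>
definition rank_cdf :: "'t measure \<Rightarrow> ('t \<Rightarrow> 'y \<Rightarrow> real) \<Rightarrow> ('t \<Rightarrow> 'y \<Rightarrow> real) \<Rightarrow> real \<Rightarrow> 't \<Rightarrow> 'y \<Rightarrow> real" where
  "rank_cdf MT phi f x th' y =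
     measure lborel {u \<in> {0..1::real}.
        Ccdf MT phi f (f th' y) y - u * Dmass MT phi f (f th' y) y \<le> x}"

definition qfun :: "'t measure \<Rightarrow> ('t \<Rightarrow> real) \<Rightarrow> ('y \<Rightarrow> 't \<Rightarrow> real) \<Rightarrow> ('t \<Rightarrow> 'y \<Rightarrow> real) \<Rightarrow> ('t \<Rightarrow> 'y \<Rightarrow> real) \<Rightarrow> real \<Rightarrow> 'y \<Rightarrow> real" where
  "qfun MT prior obs phi f x y = (\<integral> th'. post MT prior obs th' y * rank_cdf MT phi f x th' y \<partial>MT)"

definition passes_continuous_SBC :: "'t measure \<Rightarrow> 'y measure \<Rightarrow> ('t \<Rightarrow> real) \<Rightarrow> ('y \<Rightarrow> 't \<Rightarrow> real) \<Rightarrow> ('t \<Rightarrow> 'y \<Rightarrow> real) \<Rightarrow> ('t \<Rightarrow> 'y \<Rightarrow> real) \<Rightarrow> bool" where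
  "passes_continuous_SBC MT MY prior obs phi f \<longleftrightarrow>
     (\<forall>x\<in>{0..1::real}. (\<integral> y. qfun MT prior obs phi f x y * marg MT prior obs y \<partial>MY) = x)"

end

theory Submission
  imports Defs
begin

theorem mainTheorem13:
  fixes MT :: "'t measure" and MY :: "'y measure"
    and prior :: "'t \<Rightarrow> real" and obs :: "'y \<Rightarrow> 't \<Rightarrow> real"
    and phi :: "'t \<Rightarrow> 'y \<Rightarrow> real" and f :: "'t \<Rightarrow> 'y \<Rightarrow> real"
  assumes "is_model MT MY prior obs"
    and "is_posterior_family MT MY phi"
    and "is_test_quantity MT MY f"
    and "\<not> model_has_ties MT MY prior obs f"
    and "\<not> family_has_ties MT MY phi f"
  shows "passes_continuous_SBC MT MY prior obs phi f \<longleftrightarrow>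
    (\<forall>x\<in>{0..1::real}.
      (\<integral> y. (\<integral> th'. indicator
                 {th'. (\<integral> th. indicator {th. f th y < f th' y} th * phi th y \<partial>MT) \<le> x} th'
               * obs y th' * prior th' \<partial>MT) \<partial>MY) = x)"
proof -
  from assms(1) have sfT: "sigma_finite_measure MT" and sfY: "sigma_finite_measure MY"
    and prm: "prior \<in> borel_measurable MT" and prn: "\<And>th. th \<in> space MT \<Longrightarrow> prior th \<ge> 0"
    and pr1: "(\<integral>\<^sup>+ th. ennreal (prior th) \<partial>MT) = 1"
    and obm: "(\<lambda>(y, th). obs y th) \<in> borel_measurable (MY \<Otimes>\<^sub>M MT)"
    and obn: "\<And>y th. y \<in> space MY \<Longrightarrow> th \<in> space MT \<Longrightarrow> obs y th \<ge> 0"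
    and ob1: "\<And>th. th \<in> space MT \<Longrightarrow> (\<integral>\<^sup>+ y. ennreal (obs y th) \<partial>MY) = 1"
    unfolding is_model_def by auto
  from assms(2) have phm: "(\<lambda>(th, y). phi th y) \<in> borel_measurable (MT \<Otimes>\<^sub>M MY)"
    and phn: "\<And>th y. th \<in> space MT \<Longrightarrow> y \<in> space MY \<Longrightarrow> phi th y \<ge> 0"
    and ph1: "\<And>y. y \<in> space MY \<Longrightarrow> (\<integral>\<^sup>+ th. ennreal (phi th y) \<partial>MT) = 1"
    unfolding is_posterior_family_def by auto
  from assms(3) have fm: "(\<lambda>(th, y). f th y) \<in> borel_measurable (MT \<Otimes>\<^sub>M MY)"
    unfolding is_test_quantity_def by auto
  interpret T: sigma_finite_measure MT by (rule sfT)
  interpret Y: sigma_finite_measure MY by (rule sfY)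
  interpret YT: pair_sigma_finite MY MT by unfold_locales
  define I where "I y th' = (\<integral> th. indicator {th. f th y < f th' y} th * phi th y \<partial>MT)" for y th'
  define G where "G x y th' = indicator {th'. I y th' \<le> x} th' * obs y th' * prior th'" for x y th'

  have fm1: "(\<lambda>th. f th y) \<in> borel_measurable MT" if "y \<in> space MY" for y
    using measurable_compose[OF measurable_Pair2'[OF that] fm] by simp
  have phm1: "(\<lambda>th. phi th y) \<in> borel_measurable MT" if "y \<in> space MY" for y
    using measurable_compose[OF measurable_Pair2'[OF that] phm] by simp
  have obm1: "(\<lambda>th. obs y th) \<in> borel_measurable MT" if "y \<in> space MY" for y
    using measurable_compose[OF measurable_Pair1'[OF that] obm] by simp
  have phi_int: "integrable MT (\<lambda>th. phi th y)" if y: "y \<in> space MY" for y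
    by (rule integrableI_nonneg) (use phm1[OF y] phn[OF _ y] ph1[OF y] in auto)
  have ind_int: "integrable MT (\<lambda>th. indicator {th. P th} th * phi th y)"
    if y: "y \<in> space MY" and Pm: "Measurable.pred MT P" for y P
    by (rule Bochner_Integration.integrable_bound[OF phi_int[OF y]])
       (use phm1[OF y] Pm phn[OF _ y] in \<open>auto simp: indicator_def\<close>)

  have rank: "rank_cdf MT phi f x th' y = indicator {th'. I y th' \<le> x} th'"
    if y: "y \<in> space MY" and th': "th' \<in> space MT" for x y th'
  proof -
    have D0: "Dmass MT phi f (f th' y) y = 0"
    proof -
      have "Dmass MT phi f (f th' y) y \<ge> 0"
        unfolding Dmass_def by (rule Bochner_Integration.integral_nonneg) (use phn[OF _ y] in auto)
      moreover have "\<not> Dmass MT phi f (f th' y) y > 0"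
        using assms(5) y th' unfolding family_has_ties_def by auto
      ultimately show ?thesis by linarith
    qed
    have C: "Ccdf MT phi f (f th' y) y = I y th' + Dmass MT phi f (f th' y) y"
    proof -
      have "Ccdf MT phi f (f th' y) y =
         (\<integral> th. indicator {th. f th y < f th' y} th * phi th y + indicator {th. f th y = f th' y} th * phi th y \<partial>MT)"
        unfolding Ccdf_def by (rule Bochner_Integration.integral_cong) (auto simp: indicator_def)
      also have "\<dots> = I y th' + Dmass MT phi f (f th' y) y"
        unfolding I_def Dmass_def
      proof (rule Bochner_Integration.integral_add)
        have fy[measurable]: "(\<lambda>th. f th y) \<in> borel_measurable MT" by (rule fm1[OF y])
        show "integrable MT (\<lambda>th. indicator {th. f th y < f th' y} th * phi th y)"
          by (rule ind_int[OF y]) measurable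
        show "integrable MT (\<lambda>th. indicator {th. f th y = f th' y} th * phi th y)"
          by (rule ind_int[OF y]) measurable
      qed
      finally show ?thesis .
    qed
    show ?thesis
    proof (cases "I y th' \<le> x")
      case True
      then have "{u \<in> {0..1::real}. I y th' + 0 - u * 0 \<le> x} = {0..1}" by auto
      then show ?thesis unfolding rank_cdf_def C D0 using True by (simp add: indicator_def)
    next
      case False
      then have "{u \<in> {0..1::real}. I y th' + 0 - u * 0 \<le> x} = {}" by auto
      then show ?thesis unfolding rank_cdf_def C D0 using False by (simp add: indicator_def)
    qed
  qed
  note prm[measurable]
  have fA[measurable]: "(\<lambda>w. f (snd w) (fst (fst w))) \<in> borel_measurable ((MY \<Otimes>\<^sub>M MT) \<Otimes>\<^sub>M MT)"
    using measurable_compose[of "\<lambda>w. (snd w, fst (fst w))" "(MY \<Otimes>\<^sub>M MT) \<Otimes>\<^sub>M MT" "MT \<Otimes>\<^sub>M MY", OF _ fm]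
    by simp
  have fB[measurable]: "(\<lambda>w. f (snd (fst w)) (fst (fst w))) \<in> borel_measurable ((MY \<Otimes>\<^sub>M MT) \<Otimes>\<^sub>M MT)"
    using measurable_compose[of "\<lambda>w. (snd (fst w), fst (fst w))" "(MY \<Otimes>\<^sub>M MT) \<Otimes>\<^sub>M MT" "MT \<Otimes>\<^sub>M MY", OF _ fm]
    by simp
  have phA[measurable]: "(\<lambda>w. phi (snd w) (fst (fst w))) \<in> borel_measurable ((MY \<Otimes>\<^sub>M MT) \<Otimes>\<^sub>M MT)"
    using measurable_compose[of "\<lambda>w. (snd w, fst (fst w))" "(MY \<Otimes>\<^sub>M MT) \<Otimes>\<^sub>M MT" "MT \<Otimes>\<^sub>M MY", OF _ phm]
    by simp
  have obP[measurable]: "(\<lambda>p. obs (fst p) (snd p)) \<in> borel_measurable (MY \<Otimes>\<^sub>M MT)"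
    using obm by (simp add: split_beta')
  have Im[measurable]: "(\<lambda>p. I (fst p) (snd p)) \<in> borel_measurable (MY \<Otimes>\<^sub>M MT)"
  proof -
    have "(\<lambda>p. \<integral> th. (\<lambda>p th. (if f th (fst p) < f (snd p) (fst p) then 1 else 0) * phi th (fst p)) p th \<partial>MT)
        \<in> borel_measurable (MY \<Otimes>\<^sub>M MT)"
      by (rule T.borel_measurable_lebesgue_integral) (simp add: split_beta')
    then show ?thesis unfolding I_def by (simp add: indicator_def)
  qed
  have Gm[measurable]: "(\<lambda>p. G x (fst p) (snd p)) \<in> borel_measurable (MY \<Otimes>\<^sub>M MT)" for x
    unfolding G_def indicator_def by measurable
  have Gm1: "(\<lambda>th. G x y th) \<in> borel_measurable MT" if "y \<in> space MY" for x y
    using measurable_compose[OF measurable_Pair1'[OF that] Gm[of x]] by simp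
  have intGm: "(\<lambda>y. \<integral> th. G x y th \<partial>MT) \<in> borel_measurable MY" for x
    by (rule T.borel_measurable_lebesgue_integral) (use Gm[of x] in \<open>simp add: split_beta'\<close>)
  have margm: "marg MT prior obs \<in> borel_measurable MY"
    unfolding marg_def[abs_def]
    by (rule T.borel_measurable_lebesgue_integral) (simp add: split_beta')

  have qB: "qfun MT prior obs phi f x y * marg MT prior obs y =
      (\<integral> th. G x y th \<partial>MT) / marg MT prior obs y * marg MT prior obs y"
    if y: "y \<in> space MY" for x y
  proof -
    have "qfun MT prior obs phi f x y = (\<integral> th. G x y th / marg MT prior obs y \<partial>MT)"
      unfolding qfun_def
      by (rule Bochner_Integration.integral_cong) (auto simp: rank[OF y] post_def G_def)
    then show ?thesis by simp
  qed

  have AEint: "AE y in MY. integrable MT (\<lambda>th. obs y th * prior th)"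
  proof -
    have "(\<integral>\<^sup>+ y. (\<integral>\<^sup>+ th. ennreal (obs y th * prior th) \<partial>MT) \<partial>MY)
        = (\<integral>\<^sup>+ th. (\<integral>\<^sup>+ y. ennreal (obs y th * prior th) \<partial>MY) \<partial>MT)"
      by (rule YT.Fubini'[symmetric]) (simp add: split_beta')
    also have "\<dots> = (\<integral>\<^sup>+ th. ennreal (prior th) \<partial>MT)"
    proof (rule nn_integral_cong)
      fix th assume th: "th \<in> space MT"
      have "(\<integral>\<^sup>+ y. ennreal (obs y th * prior th) \<partial>MY) = (\<integral>\<^sup>+ y. ennreal (obs y th) * ennreal (prior th) \<partial>MY)"
        by (rule nn_integral_cong) (use th obn prn in \<open>simp add: ennreal_mult\<close>)
      also have "\<dots> = (\<integral>\<^sup>+ y. ennreal (obs y th) \<partial>MY) * ennreal (prior th)"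
        by (rule nn_integral_multc) (use measurable_compose[OF measurable_Pair2'[OF th] obm] in simp)
      finally show "(\<integral>\<^sup>+ y. ennreal (obs y th * prior th) \<partial>MY) = ennreal (prior th)"
        using ob1[OF th] by simp
    qed
    finally have fin: "(\<integral>\<^sup>+ y. (\<integral>\<^sup>+ th. ennreal (obs y th * prior th) \<partial>MT) \<partial>MY) \<noteq> \<infinity>"
      using pr1 by simp
    have "AE y in MY. (\<integral>\<^sup>+ th. ennreal (obs y th * prior th) \<partial>MT) \<noteq> \<infinity>"
      by (rule nn_integral_PInf_AE[OF _ fin]) (rule T.borel_measurable_nn_integral, simp add: split_beta')
    then show ?thesis
    proof (rule AE_mp[OF _ AE_I2], intro impI)
      fix y assume y: "y \<in> space MY" and ne: "(\<integral>\<^sup>+ th. ennreal (obs y th * prior th) \<partial>MT) \<noteq> \<infinity>"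
      show "integrable MT (\<lambda>th. obs y th * prior th)"
        by (rule integrableI_nonneg) (use obm1[OF y] prm obn[OF y] prn ne in \<open>auto simp: less_top\<close>)
    qed
  qed

  have eq: "(\<integral> y. qfun MT prior obs phi f x y * marg MT prior obs y \<partial>MY) = (\<integral> y. (\<integral> th. G x y th \<partial>MT) \<partial>MY)" for x
  proof (rule integral_cong_AE)
    show "(\<lambda>y. qfun MT prior obs phi f x y * marg MT prior obs y) \<in> borel_measurable MY"
      using measurable_cong[of MY "\<lambda>y. qfun MT prior obs phi f x y * marg MT prior obs y"
          "\<lambda>y. (\<integral> th. G x y th \<partial>MT) / marg MT prior obs y * marg MT prior obs y"] qB intGm[of x] margm
      by auto
    show "(\<lambda>y. \<integral> th. G x y th \<partial>MT) \<in> borel_measurable MY" by (rule intGm)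
    show "AE y in MY. qfun MT prior obs phi f x y * marg MT prior obs y = (\<integral> th. G x y th \<partial>MT)"
    proof (rule AE_mp[OF AEint AE_I2], intro impI)
      fix y assume y: "y \<in> space MY" and int: "integrable MT (\<lambda>th. obs y th * prior th)"
      show "qfun MT prior obs phi f x y * marg MT prior obs y = (\<integral> th. G x y th \<partial>MT)"
      proof (cases "marg MT prior obs y = 0")
        case False then show ?thesis using qB[OF y] by simp
      next
        case True
        have intG: "integrable MT (G x y)"
          by (rule Bochner_Integration.integrable_bound[OF int Gm1[OF y]])
             (use obn[OF y] prn in \<open>auto simp: G_def indicator_def\<close>)
        have "(\<integral> th. G x y th \<partial>MT) \<le> (\<integral> th. obs y th * prior th \<partial>MT)"
          by (rule Bochner_Integration.integral_mono[OF intG int]) (use obn[OF y] prn in \<open>auto simp: G_def indicator_def\<close>)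
        moreover have "(\<integral> th. G x y th \<partial>MT) \<ge> 0"
          by (rule Bochner_Integration.integral_nonneg) (use obn[OF y] prn in \<open>auto simp: G_def indicator_def\<close>)
        ultimately have "(\<integral> th. G x y th \<partial>MT) = 0" using True unfolding marg_def by linarith
        then show ?thesis using qB[OF y] True by simp
      qed
    qed
  qed
  show ?thesis
    unfolding passes_continuous_SBC_def eq unfolding G_def I_def by (simp add: mult.assoc)
qed

end
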